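(* Let $X$ be a non-discrete Tychonoff space with $P$-number $\tau$, and suppose $X$ has a $\tau$-discrete basis of clopen sets. Then for every positive integer $n$, the $P$-number of $X^n$ is $\tau$ and $X^n$ has a $\tau$-discrete basis of clopen sets.
   Context: All spaces are Tychonoff. The $P$-number of a space $Z$ is $|Z|$ if $Z$ is discrete; otherwise it is the largest cardinal $\tau$ such that the intersection of any family of fewer than $\tau$ open subsets of $Z$ is open. A family of subsets of $Z$ is discrete if every point of $Z$ has a neighborhood meeting at most one member of the family. A $\tau$-discrete basis of clopen sets is a base for the topology of the form $\bigcup_{\alpha<\tau}\mathcal B_\alpha$ consisting of clopen sets, with each $\mathcal B_\alpha$ a discrete family. *)

theory Defs
  imports "HOL-Analysis.Analysis" "HOL-Library.Equipollence"
begin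

definition tychonoff_space :: "'a topology \<Rightarrow> bool" where
  "tychonoff_space X \<longleftrightarrow> completely_regular_space X \<and> t1_space X"

definition discrete_space :: "'a topology \<Rightarrow> bool" where
  "discrete_space X \<longleftrightarrow> (\<forall>S. S \<subseteq> topspace X \<longrightarrow> openin X S)"

definition P_closed :: "'a topology \<Rightarrow> 'b set \<Rightarrow> bool" where
  "P_closed X T \<longleftrightarrow>
     (\<forall>\<F>. (\<forall>U\<in>\<F>. openin X U) \<and> \<F> \<prec> T \<longrightarrow> openin X (topspace X \<inter> \<Inter>\<F>))"

text \<open>For a non-discrete space, |T| is the largest
  cardinal with property P_closed; "largest" is expressed as: |T| has the property, and the
  successor cardinal |T|^+ does not, i.e. some family of at most |T| open sets has a
  non-open intersection.\<close>
definition P_number :: "'a topology \<Rightarrow> 'b set \<Rightarrow> bool" where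
  "P_number X T \<longleftrightarrow>
     (if discrete_space X then T \<approx> topspace X
      else P_closed X T \<and>
           (\<exists>\<F>. (\<forall>U\<in>\<F>. openin X U) \<and> \<F> \<lesssim> T \<and> \<not> openin X (topspace X \<inter> \<Inter>\<F>)))"

definition discrete_family :: "'a topology \<Rightarrow> 'a set set \<Rightarrow> bool" where
  "discrete_family X \<B> \<longleftrightarrow>
     (\<forall>x\<in>topspace X. \<exists>U. openin X U \<and> x \<in> U \<and>
        (\<forall>A\<in>\<B>. \<forall>B\<in>\<B>. A \<inter> U \<noteq> {} \<and> B \<inter> U \<noteq> {} \<longrightarrow> A = B))"

definition is_base :: "'a topology \<Rightarrow> 'a set set \<Rightarrow> bool" where
  "is_base X \<B> \<longleftrightarrow> (\<forall>B\<in>\<B>. openin X B) \<and>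
     (\<forall>U x. openin X U \<and> x \<in> U \<longrightarrow> (\<exists>B\<in>\<B>. x \<in> B \<and> B \<subseteq> U))"

text \<open>A |T|-discrete basis of clopen sets: a base \<Union>\<alpha>\<in>T. \<B> \<alpha> of clopen sets, each \<B> \<alpha> discrete
  (the index set T plays the role of the ordinals \<alpha> < \<tau>).\<close>
definition has_discrete_clopen_base :: "'a topology \<Rightarrow> 'b set \<Rightarrow> bool" where
  "has_discrete_clopen_base X T \<longleftrightarrow>
     (\<exists>\<B> :: 'b \<Rightarrow> 'a set set.
        is_base X (\<Union>\<alpha>\<in>T. \<B> \<alpha>) \<and>
        (\<forall>\<alpha>\<in>T. discrete_family X (\<B> \<alpha>)) \<and>
        (\<forall>B\<in>(\<Union>\<alpha>\<in>T. \<B> \<alpha>). openin X B \<and> closedin X B))"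

end

theory Submission imports Defs begin

lemma PiE_lessThan_lepoll:
  fixes n :: nat
  assumes "infinite T"
  shows "PiE {..<n} (\<lambda>_. T) \<lesssim> T"
proof (induction n)
  case 0
  have "T \<noteq> {}" using assms by auto
  then obtain a where "a \<in> T" by blast
  then show ?case unfolding lepoll_def by (rule_tac x="\<lambda>_. a" in exI) simp
next
  case (Suc n)
  have "PiE {..<Suc n} (\<lambda>_. T) \<lesssim> PiE {..<n} (\<lambda>_. T) \<times> T"
    unfolding lepoll_def
  proof (rule exI[of _ "\<lambda>f. (f(n := undefined), f n)"], intro conjI)
    show "inj_on (\<lambda>f. (f(n := undefined), f n)) (PiE {..<Suc n} (\<lambda>_. T))"
    proof (rule inj_onI)
      fix f g assume e: "(f(n := undefined), f n) = (g(n := undefined), g n)"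
      show "f = g"
      proof
        fix x
        have "(f(n := undefined)) x = (g(n := undefined)) x" using e by simp
        then show "f x = g x"
          using e by (cases "x = n") auto
      qed
    qed
    show "(\<lambda>f. (f(n := undefined), f n)) ` (PiE {..<Suc n} (\<lambda>_. T)) \<subseteq> PiE {..<n} (\<lambda>_. T) \<times> T"
    proof (rule image_subsetI)
      fix f assume f: "f \<in> PiE {..<Suc n} (\<lambda>_. T)"
      have "f(n := undefined) \<in> PiE {..<n} (\<lambda>_. T)"
        using f unfolding PiE_iff extensional_def by auto
      moreover have "f n \<in> T" using f by auto
      ultimately show "(f(n := undefined), f n) \<in> PiE {..<n} (\<lambda>_. T) \<times> T" by simp
    qed
  qed
  also have "\<dots> \<lesssim> T \<times> T" using Suc by (rule times_lepoll_mono) (rule lepoll_refl)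
  also have "T \<times> T \<lesssim> T"
    by (rule eqpoll_imp_lepoll) (simp only: eqpoll_iff_card_of_ordIso card_of_Times_same_infinite[OF assms])
  finally show ?case .
qed
lemma diag_cont:
  fixes n :: nat shows
  "continuous_map X (product_topology (\<lambda>i. X) {..<n}) (\<lambda>x. restrict (\<lambda>i. x) {..<n})"
  by (auto simp: continuous_map_componentwise)

lemma cyl_open:
  fixes n :: nat
  assumes "n \<ge> 1" "openin (product_topology (\<lambda>i. X) {..<n}) {f \<in> topspace (product_topology (\<lambda>i. X) {..<n}). f 0 \<in> S}"
  shows "openin X (topspace X \<inter> S)"
proof -
  have "openin X {x \<in> topspace X. restrict (\<lambda>i. x) {..<n} \<in> {f \<in> topspace (product_topology (\<lambda>i. X) {..<n}). f 0 \<in> S}}"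
    by (rule openin_continuous_map_preimage[OF diag_cont assms(2)])
  moreover have "{x \<in> topspace X. restrict (\<lambda>i. x) {..<n} \<in> {f \<in> topspace (product_topology (\<lambda>i. X) {..<n}). f 0 \<in> S}} = topspace X \<inter> S"
    using assms(1) by auto
  ultimately show ?thesis by simp
qed

lemma infinite_T:
  assumes "\<not> discrete_space X" "P_number X T"
  shows "infinite T"
proof
  assume fin: "finite T"
  obtain F where F: "\<forall>U\<in>F. openin X U" "F \<lesssim> T" "\<not> openin X (topspace X \<inter> \<Inter>F)"
    using assms unfolding P_number_def by auto
  have "finite F" using F(2) fin unfolding lepoll_def by (meson finite_imageD finite_subset)
  have "openin X (\<Inter>(insert (topspace X) F))"
    by (rule openin_Inter) (use \<open>finite F\<close> F(1) in auto)
  then show False using F(3) by simp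
qed


lemma P_closed_prod:
  fixes n :: nat
  assumes PX: "P_closed X T"
  shows "P_closed (product_topology (\<lambda>i. X) {..<n}) T"
  unfolding P_closed_def
proof (intro allI impI)
  let ?Y = "product_topology (\<lambda>i. X) {..<n}"
  fix F assume "(\<forall>U\<in>F. openin ?Y U) \<and> F \<prec> T"
  then have Fo: "\<forall>U\<in>F. openin ?Y U" and FT: "F \<prec> T" by auto
  show "openin ?Y (topspace ?Y \<inter> \<Inter>F)"
    unfolding openin_product_topology_alt
  proof
    fix x assume x: "x \<in> topspace ?Y \<inter> \<Inter>F"
    have "\<forall>U\<in>F. \<exists>V. (\<forall>i \<in> {..<n}. openin X (V i)) \<and> x \<in> Pi\<^sub>E {..<n} V \<and> Pi\<^sub>E {..<n} V \<subseteq> U"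
    proof
      fix U assume U: "U \<in> F"
      then have "x \<in> U" using x by auto
      then show "\<exists>V. (\<forall>i \<in> {..<n}. openin X (V i)) \<and> x \<in> Pi\<^sub>E {..<n} V \<and> Pi\<^sub>E {..<n} V \<subseteq> U"
      proof -
        obtain V where "finite {i \<in> {..<n}. V i \<noteq> topspace X}" "\<forall>i \<in> {..<n}. openin X (V i)" "x \<in> Pi\<^sub>E {..<n} V" "Pi\<^sub>E {..<n} V \<subseteq> U"
          using Fo U \<open>x \<in> U\<close> unfolding openin_product_topology_alt by meson
        then show ?thesis by blast
      qed
    qed
    from bchoice[OF this] obtain c where c0: "\<forall>U\<in>F. (\<forall>i \<in> {..<n}. openin X (c U i)) \<and> x \<in> Pi\<^sub>E {..<n} (c U) \<and> Pi\<^sub>E {..<n} (c U) \<subseteq> U"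
      by blast
    have c1: "\<And>U i. U \<in> F \<Longrightarrow> i < n \<Longrightarrow> openin X (c U i)"
      and c2: "\<And>U. U \<in> F \<Longrightarrow> x \<in> Pi\<^sub>E {..<n} (c U)"
      and c3: "\<And>U. U \<in> F \<Longrightarrow> Pi\<^sub>E {..<n} (c U) \<subseteq> U" using c0 by auto
    define W where "W i = topspace X \<inter> \<Inter>((\<lambda>U. c U i) ` F)" for i
    have Wo: "openin X (W i)" if "i < n" for i
    proof -
      have "(\<lambda>U. c U i) ` F \<prec> T" by (rule lesspoll_trans1[OF image_lepoll FT])
      moreover have "\<forall>V\<in>(\<lambda>U. c U i) ` F. openin X V" using c1 that by auto
      ultimately show ?thesis unfolding W_def by (rule PX[unfolded P_closed_def, rule_format, OF conjI, rotated])
    qed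
    show "\<exists>U. finite {i \<in> {..<n}. U i \<noteq> topspace X} \<and> (\<forall>i \<in> {..<n}. openin X (U i)) \<and>
             x \<in> Pi\<^sub>E {..<n} U \<and> Pi\<^sub>E {..<n} U \<subseteq> topspace ?Y \<inter> \<Inter>F"
    proof (intro exI conjI)
      show "finite {i \<in> {..<n}. W i \<noteq> topspace X}" by simp
      show "\<forall>i \<in> {..<n}. openin X (W i)" using Wo by simp
      show "x \<in> Pi\<^sub>E {..<n} W"
        using x c2 unfolding W_def by (auto simp: PiE_iff)
      show "Pi\<^sub>E {..<n} W \<subseteq> topspace ?Y \<inter> \<Inter>F"
      proof
        fix f assume f: "f \<in> Pi\<^sub>E {..<n} W"
        have "f \<in> topspace ?Y" using f unfolding W_def by (auto simp: PiE_iff)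
        moreover have "f \<in> U" if "U \<in> F" for U
        proof -
          have "f \<in> Pi\<^sub>E {..<n} (c U)" using f that unfolding W_def by (auto simp: PiE_iff)
          then show ?thesis using c3[OF that] by blast
        qed
        ultimately show "f \<in> topspace ?Y \<inter> \<Inter>F" by blast
      qed
    qed
  qed
qed

lemma cyl_openin:
  fixes n :: nat
  assumes "n \<ge> 1" "openin X U"
  shows "openin (product_topology (\<lambda>i. X) {..<n}) {f \<in> topspace (product_topology (\<lambda>i. X) {..<n}). f 0 \<in> U}"
  using assms by (intro openin_continuous_map_preimage[OF continuous_map_product_projection]) auto

lemma not_discrete_prod:
  fixes n :: nat
  assumes "n \<ge> 1" "\<not> discrete_space X"
  shows "\<not> discrete_space (product_topology (\<lambda>i. X) {..<n})"
proof
  assume d: "discrete_space (product_topology (\<lambda>i. X) {..<n})"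
  obtain S where S: "S \<subseteq> topspace X" "\<not> openin X S" using assms(2) unfolding discrete_space_def by auto
  have "openin (product_topology (\<lambda>i. X) {..<n}) {f \<in> topspace (product_topology (\<lambda>i. X) {..<n}). f 0 \<in> S}"
    using d unfolding discrete_space_def by auto
  then have "openin X (topspace X \<inter> S)" by (rule cyl_open[OF assms(1)])
  then show False using S by (simp add: Int_absorb1)
qed

lemma witness_prod:
  fixes n :: nat
  assumes "n \<ge> 1" "\<forall>U\<in>F. openin X U" "F \<lesssim> T" "\<not> openin X (topspace X \<inter> \<Inter>F)"
  shows "\<exists>G. (\<forall>U\<in>G. openin (product_topology (\<lambda>i. X) {..<n}) U) \<and> G \<lesssim> T \<and>
     \<not> openin (product_topology (\<lambda>i. X) {..<n}) (topspace (product_topology (\<lambda>i. X) {..<n}) \<inter> \<Inter>G)"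
proof -
  let ?Y = "product_topology (\<lambda>i. X) {..<n}"
  let ?c = "\<lambda>U. {f \<in> topspace ?Y. f 0 \<in> U}"
  have eq: "topspace ?Y \<inter> \<Inter>(?c ` F) = ?c (\<Inter>F)" by auto
  show ?thesis
  proof (intro exI conjI)
    show "\<forall>U\<in>?c ` F. openin ?Y U" using assms(1,2) cyl_openin by blast
    show "?c ` F \<lesssim> T" using image_lepoll assms(3) by (rule lepoll_trans)
    show "\<not> openin ?Y (topspace ?Y \<inter> \<Inter>(?c ` F))"
      unfolding eq using cyl_open[OF assms(1)] assms(4) by blast
  qed
qed


lemma base_prod:
  fixes n :: nat and X :: "'a topology" and T :: "'b set"
  assumes inf: "infinite T" and hb: "has_discrete_clopen_base X T"
  shows "has_discrete_clopen_base (product_topology (\<lambda>i. X) {..<n}) T"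
proof -
  let ?Y = "product_topology (\<lambda>i. X) {..<n}"
  obtain Bf :: "'b \<Rightarrow> 'a set set" where base: "is_base X (\<Union>\<alpha>\<in>T. Bf \<alpha>)"
    and disc: "\<forall>\<alpha>\<in>T. discrete_family X (Bf \<alpha>)"
    and co: "\<forall>B\<in>(\<Union>\<alpha>\<in>T. Bf \<alpha>). openin X B \<and> closedin X B"
    using hb unfolding has_discrete_clopen_base_def by blast
  define P where "P = PiE {..<n} (\<lambda>_. T)"
  obtain h where h: "inj_on h P" "h ` P \<subseteq> T"
    using PiE_lessThan_lepoll[OF inf, of n] unfolding lepoll_def P_def by blast
  define Fam where "Fam \<alpha> = (\<lambda>B. PiE {..<n} B) ` PiE {..<n} (\<lambda>i. Bf (\<alpha> i))" for \<alpha>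
  define B' where "B' \<beta> = (if \<beta> \<in> h ` P then Fam (inv_into P h \<beta>) else {})" for \<beta>
  have U: "(\<Union>\<beta>\<in>T. B' \<beta>) = (\<Union>\<alpha>\<in>P. Fam \<alpha>)"
  proof
    show "(\<Union>\<beta>\<in>T. B' \<beta>) \<subseteq> (\<Union>\<alpha>\<in>P. Fam \<alpha>)"
    proof
      fix Z assume "Z \<in> (\<Union>\<beta>\<in>T. B' \<beta>)"
      then obtain \<beta> where "\<beta> \<in> h ` P" "Z \<in> Fam (inv_into P h \<beta>)"
        unfolding B'_def by (auto split: if_splits)
      moreover have "inv_into P h \<beta> \<in> P" using \<open>\<beta> \<in> h ` P\<close> by (rule inv_into_into)
      ultimately show "Z \<in> (\<Union>\<alpha>\<in>P. Fam \<alpha>)" by blast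
    qed
    show "(\<Union>\<alpha>\<in>P. Fam \<alpha>) \<subseteq> (\<Union>\<beta>\<in>T. B' \<beta>)"
    proof
      fix Z assume "Z \<in> (\<Union>\<alpha>\<in>P. Fam \<alpha>)"
      then obtain \<alpha> where a: "\<alpha> \<in> P" "Z \<in> Fam \<alpha>" by blast
      have "B' (h \<alpha>) = Fam \<alpha>" unfolding B'_def using a(1) inv_into_f_f[OF h(1) a(1)] by simp
      moreover have "h \<alpha> \<in> T" using h(2) a(1) by blast
      ultimately show "Z \<in> (\<Union>\<beta>\<in>T. B' \<beta>)" using a(2) by blast
    qed
  qed
  have memb: "openin ?Y Z \<and> closedin ?Y Z" if Z: "Z \<in> Fam \<alpha>" and aP: "\<alpha> \<in> P" for Z \<alpha>
  proof -
    obtain B where B: "B \<in> PiE {..<n} (\<lambda>i. Bf (\<alpha> i))" "Z = PiE {..<n} B"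
      using Z unfolding Fam_def by blast
    have oc: "openin X (B i) \<and> closedin X (B i)" if "i < n" for i
    proof -
      have "\<alpha> i \<in> T" using aP that unfolding P_def by auto
      moreover have "B i \<in> Bf (\<alpha> i)" using B(1) that by auto
      ultimately show ?thesis using co by blast
    qed
    have "openin ?Y (PiE {..<n} B)" using oc by (simp add: openin_PiE_gen)
    moreover have "closedin ?Y (PiE {..<n} B)" using oc by (simp add: closedin_product_topology)
    ultimately show ?thesis using B(2) by simp
  qed
  have discF: "discrete_family ?Y (Fam \<alpha>)" if aP: "\<alpha> \<in> P" for \<alpha>
    unfolding discrete_family_def
  proof
    fix x assume x: "x \<in> topspace ?Y"
    have "\<forall>i\<in>{..<n}. \<exists>U. openin X U \<and> x i \<in> U \<and>
            (\<forall>A\<in>Bf (\<alpha> i). \<forall>B\<in>Bf (\<alpha> i). A \<inter> U \<noteq> {} \<and> B \<inter> U \<noteq> {} \<longrightarrow> A = B)"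
    proof
      fix i assume i: "i \<in> {..<n}"
      have "\<alpha> i \<in> T" using aP i unfolding P_def by auto
      then have "discrete_family X (Bf (\<alpha> i))" using disc by blast
      moreover have "x i \<in> topspace X" using x i by auto
      ultimately show "\<exists>U. openin X U \<and> x i \<in> U \<and>
            (\<forall>A\<in>Bf (\<alpha> i). \<forall>B\<in>Bf (\<alpha> i). A \<inter> U \<noteq> {} \<and> B \<inter> U \<noteq> {} \<longrightarrow> A = B)"
        unfolding discrete_family_def by blast
    qed
    from bchoice[OF this] obtain u where u: "\<forall>i\<in>{..<n}. openin X (u i) \<and> x i \<in> u i \<and>
            (\<forall>A\<in>Bf (\<alpha> i). \<forall>B\<in>Bf (\<alpha> i). A \<inter> u i \<noteq> {} \<and> B \<inter> u i \<noteq> {} \<longrightarrow> A = B)"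
      by blast
    show "\<exists>W. openin ?Y W \<and> x \<in> W \<and> (\<forall>A\<in>Fam \<alpha>. \<forall>B\<in>Fam \<alpha>. A \<inter> W \<noteq> {} \<and> B \<inter> W \<noteq> {} \<longrightarrow> A = B)"
    proof (intro exI conjI ballI impI)
      show "openin ?Y (PiE {..<n} u)" using u by (simp add: openin_PiE_gen)
      show "x \<in> PiE {..<n} u" using x u by (auto simp: PiE_iff)
      fix A' C' assume A': "A' \<in> Fam \<alpha>" and C': "C' \<in> Fam \<alpha>"
        and ne: "A' \<inter> PiE {..<n} u \<noteq> {} \<and> C' \<inter> PiE {..<n} u \<noteq> {}"
      obtain A where A: "A \<in> PiE {..<n} (\<lambda>i. Bf (\<alpha> i))" "A' = PiE {..<n} A"
        using A' unfolding Fam_def by blast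
      obtain C where C: "C \<in> PiE {..<n} (\<lambda>i. Bf (\<alpha> i))" "C' = PiE {..<n} C"
        using C' unfolding Fam_def by blast
      obtain f where f: "f \<in> PiE {..<n} A" "f \<in> PiE {..<n} u" using ne A(2) by blast
      obtain g where g: "g \<in> PiE {..<n} C" "g \<in> PiE {..<n} u" using ne C(2) by blast
      have "A = C"
      proof (rule PiE_ext[OF A(1) C(1)])
        fix i assume i: "i \<in> {..<n}"
        have "A i \<inter> u i \<noteq> {}" using f i by (auto simp: PiE_iff)
        moreover have "C i \<inter> u i \<noteq> {}" using g i by (auto simp: PiE_iff)
        moreover have "A i \<in> Bf (\<alpha> i)" "C i \<in> Bf (\<alpha> i)" using A(1) C(1) i by auto
        ultimately show "A i = C i" using u i by blast
      qed
      then show "A' = C'" using A(2) C(2) by simp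
    qed
  qed
  have isb: "is_base ?Y (\<Union>\<alpha>\<in>P. Fam \<alpha>)"
    unfolding is_base_def
  proof (intro conjI allI impI)
    show "\<forall>B\<in>(\<Union>\<alpha>\<in>P. Fam \<alpha>). openin ?Y B" using memb by blast
    fix U x assume Ux: "openin ?Y U \<and> x \<in> U"
    obtain V where V: "\<forall>i \<in> {..<n}. openin X (V i)" "x \<in> Pi\<^sub>E {..<n} V" "Pi\<^sub>E {..<n} V \<subseteq> U"
      using Ux unfolding openin_product_topology_alt by meson
    have "\<forall>i\<in>{..<n}. \<exists>a. a \<in> T \<and> (\<exists>B. B \<in> Bf a \<and> x i \<in> B \<and> B \<subseteq> V i)"
    proof
      fix i assume i: "i \<in> {..<n}"
      have "openin X (V i) \<and> x i \<in> V i" using V i by auto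
      then obtain B where "B \<in> (\<Union>\<alpha>\<in>T. Bf \<alpha>)" "x i \<in> B" "B \<subseteq> V i"
        using base unfolding is_base_def by blast
      then show "\<exists>a. a \<in> T \<and> (\<exists>B. B \<in> Bf a \<and> x i \<in> B \<and> B \<subseteq> V i)" by blast
    qed
    from bchoice[OF this] obtain a where a: "\<forall>i\<in>{..<n}. a i \<in> T \<and> (\<exists>B. B \<in> Bf (a i) \<and> x i \<in> B \<and> B \<subseteq> V i)"
      by blast
    then have "\<forall>i\<in>{..<n}. \<exists>B. B \<in> Bf (a i) \<and> x i \<in> B \<and> B \<subseteq> V i" by blast
    from bchoice[OF this] obtain b where b: "\<forall>i\<in>{..<n}. b i \<in> Bf (a i) \<and> x i \<in> b i \<and> b i \<subseteq> V i"
      by blast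
    define \<alpha> where "\<alpha> = restrict a {..<n}"
    define bb where "bb = restrict b {..<n}"
    have aP: "\<alpha> \<in> P" unfolding \<alpha>_def P_def restrict_PiE_iff using a by blast
    have bbin: "bb \<in> PiE {..<n} (\<lambda>i. Bf (\<alpha> i))" unfolding bb_def restrict_PiE_iff
      using b unfolding \<alpha>_def by simp
    have box: "PiE {..<n} bb \<in> Fam \<alpha>" unfolding Fam_def using bbin by blast
    have xe: "x \<in> extensional {..<n}" using V(2) by (auto simp: PiE_iff)
    have "x \<in> PiE {..<n} bb" unfolding bb_def PiE_iff using b xe by simp
    moreover have "PiE {..<n} bb \<subseteq> U"
    proof -
      have "PiE {..<n} bb \<subseteq> PiE {..<n} V"
      proof
        fix f assume f: "f \<in> PiE {..<n} bb"
        have "f i \<in> V i" if i: "i \<in> {..<n}" for i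
        proof -
          have "f i \<in> b i" using f i unfolding bb_def by (auto simp: PiE_iff)
          then show ?thesis using b i by blast
        qed
        moreover have "f \<in> extensional {..<n}" using f by (auto simp: PiE_iff)
        ultimately show "f \<in> PiE {..<n} V" by (auto simp: PiE_iff)
      qed
      then show ?thesis using V(3) by (rule subset_trans)
    qed
    moreover have "PiE {..<n} bb \<in> (\<Union>\<alpha>\<in>P. Fam \<alpha>)" using aP box by blast
    ultimately show "\<exists>B\<in>(\<Union>\<alpha>\<in>P. Fam \<alpha>). x \<in> B \<and> B \<subseteq> U" by (intro bexI conjI)
  qed
  have discB: "discrete_family ?Y (B' \<beta>)" if "\<beta> \<in> T" for \<beta>
  proof (cases "\<beta> \<in> h ` P")
    case True
    then show ?thesis unfolding B'_def using discF[OF inv_into_into[OF True]] by simp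
  next
    case False
    have "discrete_family ?Y {}" unfolding discrete_family_def by blast
    then show ?thesis unfolding B'_def using False by simp
  qed
  show ?thesis
    unfolding has_discrete_clopen_base_def
  proof (intro exI conjI)
    show "is_base ?Y (\<Union>\<beta>\<in>T. B' \<beta>)" unfolding U by (rule isb)
    show "\<forall>\<beta>\<in>T. discrete_family ?Y (B' \<beta>)" using discB by blast
    show "\<forall>B\<in>(\<Union>\<beta>\<in>T. B' \<beta>). openin ?Y B \<and> closedin ?Y B" unfolding U using memb by blast
  qed
qed

theorem lemma2p3:
  fixes X :: "'a topology" and T :: "'b set" and n :: nat
  assumes "tychonoff_space X"
    and "\<not> discrete_space X"
    and "P_number X T"
    and "has_discrete_clopen_base X T"
    and "n \<ge> 1"
  shows "P_number (product_topology (\<lambda>i. X) {..<n}) T \<and>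
         has_discrete_clopen_base (product_topology (\<lambda>i. X) {..<n}) T"
proof
  have inf: "infinite T" by (rule infinite_T[OF assms(2,3)])
  have PX: "P_closed X T" using assms(2,3) unfolding P_number_def by auto
  obtain F where F: "\<forall>U\<in>F. openin X U" "F \<lesssim> T" "\<not> openin X (topspace X \<inter> \<Inter>F)"
    using assms(2,3) unfolding P_number_def by auto
  show "P_number (product_topology (\<lambda>i. X) {..<n}) T"
    unfolding P_number_def
    using not_discrete_prod[OF assms(5,2)] P_closed_prod[OF PX] witness_prod[OF assms(5) F]
    by simp
  show "has_discrete_clopen_base (product_topology (\<lambda>i. X) {..<n}) T"
    by (rule base_prod[OF inf assms(4)])
qed

end
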